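(* Let $\langle \mathscr{A} \mid \mathscr{R} \rangle$ be a strongly $C(4)$ presentation. Then the monoid presented is left cancellative if and only if $\mathscr{R}$ contains no relation of the form $(ar, as)$ where $a \in \mathscr{A}$ and $r, s \in \mathscr{A}^*$.
   Context: A monoid presentation $\langle \mathscr{A} \mid \mathscr{R} \rangle$ consists of an alphabet $\mathscr{A}$ and a set $\mathscr{R} \subseteq \mathscr{A}^* \times \mathscr{A}^*$ of relations; the monoid presented is $\mathscr{A}^*$ modulo the smallest congruence containing $\mathscr{R}$. A relation word is a word occurring as one side of a relation. A piece is a word which occurs as a factor of two distinct relation words, or in two different (possibly overlapping) positions within one relation word; the empty word is always a piece. The presentation is $C(n)$ if no relation word can be written as a product of strictly fewer than $n$ pieces, and strongly $C(n)$ if it is $C(n)$ and additionally has no repeated relation words (no word occurs more than once as a side of a relation). *)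

theory Defs
  imports Main
begin

text \<open>A monoid presentation over the alphabet given by the type 'a: a set of
relations R, i.e. pairs of words. The presented monoid is 'a list modulo the
smallest congruence containing R.\<close>

inductive pres_cong :: "('a list \<times> 'a list) set \<Rightarrow> 'a list \<Rightarrow> 'a list \<Rightarrow> bool"
  for R :: "('a list \<times> 'a list) set" where
  base: "(u, v) \<in> R \<Longrightarrow> pres_cong R u v"
| refl: "pres_cong R u u"
| sym: "pres_cong R u v \<Longrightarrow> pres_cong R v u"
| trans: "pres_cong R u v \<Longrightarrow> pres_cong R v w \<Longrightarrow> pres_cong R u w"
| compat: "pres_cong R u v \<Longrightarrow> pres_cong R (p @ u @ q) (p @ v @ q)"

definition left_cancellative :: "('a list \<times> 'a list) set \<Rightarrow> bool" where
  "left_cancellative R \<longleftrightarrow>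
     (\<forall>x y z. pres_cong R (x @ y) (x @ z) \<longrightarrow> pres_cong R y z)"

definition rel_words :: "('a list \<times> 'a list) set \<Rightarrow> 'a list set" where
  "rel_words R = fst ` R \<union> snd ` R"

definition occurs_at :: "'a list \<Rightarrow> 'a list \<Rightarrow> nat \<Rightarrow> bool" where
  "occurs_at w u i \<longleftrightarrow> (\<exists>x y. u = x @ w @ y \<and> length x = i)"

definition is_factor :: "'a list \<Rightarrow> 'a list \<Rightarrow> bool" where
  "is_factor w u \<longleftrightarrow> (\<exists>i. occurs_at w u i)"

definition piece :: "('a list \<times> 'a list) set \<Rightarrow> 'a list \<Rightarrow> bool" where
  "piece R w \<longleftrightarrow> w = [] \<or>
     (\<exists>u\<in>rel_words R. \<exists>v\<in>rel_words R. u \<noteq> v \<and> is_factor w u \<and> is_factor w v) \<or>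
     (\<exists>u\<in>rel_words R. \<exists>i j. i \<noteq> j \<and> occurs_at w u i \<and> occurs_at w u j)"

definition small_overlap_C :: "nat \<Rightarrow> ('a list \<times> 'a list) set \<Rightarrow> bool" where
  "small_overlap_C n R \<longleftrightarrow>
     (\<forall>u\<in>rel_words R. \<not> (\<exists>ps. length ps < n \<and> (\<forall>p\<in>set ps. piece R p) \<and> concat ps = u))"

text \<open>No repeated relation words: each word occurs at most once as a side of a
relation (counting both sides of all relations).\<close>
definition no_repeated_rel_words :: "('a list \<times> 'a list) set \<Rightarrow> bool" where
  "no_repeated_rel_words R \<longleftrightarrow>
     inj_on (\<lambda>(r, b). if b then snd r else fst r) (R \<times> (UNIV :: bool set))"

definition strongly_C :: "nat \<Rightarrow> ('a list \<times> 'a list) set \<Rightarrow> bool" where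
  "strongly_C n R \<longleftrightarrow> small_overlap_C n R \<and> no_repeated_rel_words R"

end

theory Submission
  imports Defs
begin

lemma app_split: "a @ b = c @ d \<Longrightarrow> (\<exists>w. c = a @ w \<and> b = w @ d) \<or> (\<exists>w. w \<noteq> [] \<and> a = c @ w \<and> d = w @ b)"
  by (auto simp: append_eq_append_conv2)

definition relw :: "('a list \<times> 'a list) set \<Rightarrow> 'a list \<Rightarrow> 'a list \<Rightarrow> bool" where
  "relw R l r \<longleftrightarrow> (l, r) \<in> R \<or> (r, l) \<in> R"

definition stp :: "('a list \<times> 'a list) set \<Rightarrow> 'a list \<Rightarrow> 'a list \<Rightarrow> bool" where
  "stp R u v \<longleftrightarrow> (\<exists>x y l r. relw R l r \<and> u = x @ l @ y \<and> v = x @ r @ y)"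

lemma relw_sym: "relw R l r \<Longrightarrow> relw R r l" by (auto simp: relw_def)

lemma relw_W: "relw R l r \<Longrightarrow> l \<in> rel_words R \<and> r \<in> rel_words R"
  unfolding relw_def rel_words_def by force

lemma stp_sym: "stp R u v \<Longrightarrow> stp R v u"
  unfolding stp_def using relw_sym by blast

lemma stp_compat: "stp R u v \<Longrightarrow> stp R (p @ u @ q) (p @ v @ q)"
  unfolding stp_def by (metis append.assoc)

lemma rt_sym: "(stp R)\<^sup>*\<^sup>* u v \<Longrightarrow> (stp R)\<^sup>*\<^sup>* v u"
  by (induction rule: rtranclp_induct) (auto intro: converse_rtranclp_into_rtranclp stp_sym)

lemma rt_compat: "(stp R)\<^sup>*\<^sup>* u v \<Longrightarrow> (stp R)\<^sup>*\<^sup>* (p @ u @ q) (p @ v @ q)"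
  by (induction rule: rtranclp_induct) (auto intro: rtranclp.rtrancl_into_rtrancl stp_compat)

lemma cong_imp_rt: "pres_cong R u v \<Longrightarrow> (stp R)\<^sup>*\<^sup>* u v"
proof (induction rule: pres_cong.induct)
  case (base u v)
  have "stp R u v" unfolding stp_def relw_def
    by (rule exI[of _ "[]"], rule exI[of _ "[]"]) (use base in auto)
  then show ?case by auto
next
  case (refl u) then show ?case by auto
next
  case (sym u v) then show ?case using rt_sym by blast
next
  case (trans u v w) then show ?case by auto
next
  case (compat u v p q) then show ?case using rt_compat by blast
qed

lemma stp_imp_cong: "stp R u v \<Longrightarrow> pres_cong R u v"
  unfolding stp_def relw_def
  by (auto intro: pres_cong.compat pres_cong.base pres_cong.sym)

lemma rt_imp_cong: "(stp R)\<^sup>*\<^sup>* u v \<Longrightarrow> pres_cong R u v"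
  by (induction rule: rtranclp_induct) (auto intro: pres_cong.refl pres_cong.trans stp_imp_cong)

lemma pow_prefix: "(stp R ^^ n) u v \<Longrightarrow> (stp R ^^ n) (p @ u) (p @ v)"
proof (induction n arbitrary: v)
  case 0 then show ?case by simp
next
  case (Suc n)
  then obtain w where "(stp R ^^ n) u w" "stp R w v" by (auto elim: relpowp_Suc_E)
  then show ?case using Suc stp_compat[of R w v p "[]"] by (auto intro: relpowp_Suc_I)
qed

locale sc4 =
  fixes R :: "('a list \<times> 'a list) set"
  assumes C4: "small_overlap_C 4 R" and NR: "no_repeated_rel_words R"
begin

abbreviation "W \<equiv> rel_words R"

lemma noC: "u \<in> W \<Longrightarrow> length ps < 4 \<Longrightarrow> (\<forall>p\<in>set ps. piece R p) \<Longrightarrow> concat ps = u \<Longrightarrow> False"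
  using C4 unfolding small_overlap_C_def by blast

lemma W_ne: "u \<in> W \<Longrightarrow> u \<noteq> []"
  using noC[of u "[]"] by auto

lemma np1: "u \<in> W \<Longrightarrow> piece R u \<Longrightarrow> False"
  using noC[of u "[u]"] by auto

lemma np2: "u \<in> W \<Longrightarrow> piece R a \<Longrightarrow> piece R b \<Longrightarrow> u = a @ b \<Longrightarrow> False"
  using noC[of u "[a,b]"] by auto

lemma np3: "u \<in> W \<Longrightarrow> piece R a \<Longrightarrow> piece R b \<Longrightarrow> piece R c \<Longrightarrow> u = a @ b @ c \<Longrightarrow> False"
  using noC[of u "[a,b,c]"] by auto

lemma piece_I: "u \<in> W \<Longrightarrow> v \<in> W \<Longrightarrow> u = x1 @ w @ y1 \<Longrightarrow> v = x2 @ w @ y2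
   \<Longrightarrow> u \<noteq> v \<or> length x1 \<noteq> length x2 \<Longrightarrow> piece R w"
  unfolding piece_def is_factor_def occurs_at_def by blast

lemma piece_Nil: "piece R []" by (simp add: piece_def)

lemma piece_factor: "piece R (p @ q @ r) \<Longrightarrow> piece R q"
proof -
  assume h: "piece R (p @ q @ r)"
  have occ: "occurs_at q u (i + length p)" if "occurs_at (p @ q @ r) u i" for u i
    using that unfolding occurs_at_def by (metis append.assoc length_append)
  show ?thesis
  proof (cases "q = []")
    case True then show ?thesis by (simp add: piece_Nil)
  next
    case False
    from h False have "(\<exists>u\<in>W. \<exists>v\<in>W. u \<noteq> v \<and> is_factor (p @ q @ r) u \<and> is_factor (p @ q @ r) v) \<or> (\<exists>u\<in>W. \<exists>i j. i \<noteq> j \<and> occurs_at (p @ q @ r) u i \<and> occurs_at (p @ q @ r) u j)"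
      unfolding piece_def by simp
    then show ?thesis
    proof
      assume "\<exists>u\<in>W. \<exists>v\<in>W. u \<noteq> v \<and> is_factor (p @ q @ r) u \<and> is_factor (p @ q @ r) v"
      then show ?thesis unfolding is_factor_def piece_def using occ by blast
    next
      assume "\<exists>u\<in>W. \<exists>i j. i \<noteq> j \<and> occurs_at (p @ q @ r) u i \<and> occurs_at (p @ q @ r) u j"
      then obtain u i j where "u \<in> W" "i \<noteq> j" "occurs_at (p @ q @ r) u i" "occurs_at (p @ q @ r) u j" by blast
      moreover have "i + length p \<noteq> j + length p" using \<open>i \<noteq> j\<close> by simp
      ultimately show ?thesis unfolding piece_def using occ[of u i] occ[of u j] by blast
    qed
  qed
qed

lemma piece_pre: "piece R (p @ q) \<Longrightarrow> piece R p"
  using piece_factor[of "[]" p q] by simp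

lemma piece_suf: "piece R (p @ q) \<Longrightarrow> piece R q"
  using piece_factor[of p q "[]"] by simp

lemma NC: "m \<in> W \<Longrightarrow> n \<in> W \<Longrightarrow> n = x @ m @ y \<Longrightarrow> x = [] \<and> y = [] \<and> m = n"
proof -
  assume a: "m \<in> W" "n \<in> W" "n = x @ m @ y"
  show ?thesis
  proof (cases "m = n")
    case True
    then have "length (x @ m @ y) = length m" using a by simp
    then have "x = [] \<and> y = []" by simp
    then show ?thesis using True by simp
  next
    case False
    then have "piece R m" using piece_I[of m n "[]" m "[]" x y] a by auto
    then show ?thesis using np1 a by blast
  qed
qed

definition zlen :: "'a list \<Rightarrow> nat" where
  "zlen m = (GREATEST k. k \<le> length m \<and> piece R (drop (length m - k) m))"
definition zp :: "'a list \<Rightarrow> 'a list" where "zp m = drop (length m - zlen m) m"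
definition xyp :: "'a list \<Rightarrow> 'a list" where "xyp m = take (length m - zlen m) m"

lemma zlen_prop: "zlen m \<le> length m \<and> piece R (zp m)"
proof -
  have "(\<lambda>k. k \<le> length m \<and> piece R (drop (length m - k) m)) (zlen m)"
    unfolding zlen_def by (rule GreatestI_nat[of _ 0 "length m"]) (simp_all add: piece_Nil)
  then show ?thesis by (simp add: zp_def)
qed

lemma zp_piece: "piece R (zp m)" using zlen_prop by blast

lemma len_zp: "length (zp m) = zlen m" using zlen_prop unfolding zp_def by simp

lemma zlen_max: "m = p @ s \<Longrightarrow> piece R s \<Longrightarrow> length s \<le> zlen m"
  unfolding zlen_def by (rule Greatest_le_nat[of _ _ "length m"]) auto

lemma xy_zp: "xyp m @ zp m = m" by (simp add: xyp_def zp_def)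

lemma xy_np: "m \<in> W \<Longrightarrow> piece R (xyp m) \<Longrightarrow> False"
  using np2[of m "xyp m" "zp m"] zp_piece xy_zp by simp

lemma xy_ne: "m \<in> W \<Longrightarrow> xyp m \<noteq> []"
proof
  assume "m \<in> W" "xyp m = []"
  then have "m = zp m" using xy_zp[of m] by simp
  then show False using np1 zp_piece \<open>m \<in> W\<close> by metis
qed

inductive G :: "'a list \<Rightarrow> 'a list \<Rightarrow> bool" where
  G1: "G Z (Z @ t)"
| G2: "m \<in> W \<Longrightarrow> Z = P @ P' \<Longrightarrow> G (zp m) v \<Longrightarrow> G Z (P @ xyp m @ v)"

end

context sc4
begin

lemma safe:
  assumes nW: "n \<in> W" and g: "G (zp n) u" and eq: "xyp n @ u = x @ m @ y" and mW: "m \<in> W"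
    and xne: "x \<noteq> []" and xl: "length x < length (xyp n)"
  shows False
proof -
  obtain s where XY: "xyp n = x @ s" and sne: "s \<noteq> []" and su: "m @ y = s @ u"
    using app_split[OF eq] xl by auto
  have nZ: "n = x @ s @ zp n" using XY xy_zp[of n] by simp
  show False
  proof (cases "\<exists>w. s = m @ w \<and> y = w @ u")
    case True
    then obtain w where "s = m @ w" by blast
    then have "n = x @ m @ (w @ zp n)" using nZ by simp
    then show False using NC[OF mW nW] xne by blast
  next
    case False
    then obtain r where rne: "r \<noteq> []" and mr: "m = s @ r" and ur: "u = r @ y"
      using app_split[OF su] by blast
    have ps: "piece R s" using piece_I[OF nW mW nZ, of "[]" r] mr xne by auto
    from g show False
    proof (cases rule: G.cases)
      case (G1 t)
      have "r @ y = zp n @ t" using ur G1 by simp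
      from app_split[OF this] show False
      proof (elim disjE exE conjE)
        fix w assume "zp n = r @ w" "y = w @ t"
        then have "n = x @ m @ w" using nZ mr by simp
        then show False using NC[OF mW nW] xne by blast
      next
        fix w assume "w \<noteq> []" "r = zp n @ w" "t = w @ y"
        then have p: "piece R (s @ zp n)" using piece_I[OF nW mW, of x "s @ zp n" "[]" "[]" w] nZ mr xne by auto
        have "length (s @ zp n) \<le> zlen n" using zlen_max[of n x "s @ zp n"] p nZ by simp
        then show False using len_zp[of n] sne by simp
      qed
    next
      case (G2 m' P P' v)
      have "r @ y = P @ (xyp m' @ v)" using ur G2 by simp
      from app_split[OF this] show False
      proof (elim disjE exE conjE)
        fix w assume "P = r @ w" "y = w @ xyp m' @ v"
        then have "n = x @ m @ (w @ P')" using nZ mr G2 by simp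
        then show False using NC[OF mW nW] xne by blast
      next
        fix q assume qne: "q \<noteq> []" and rq: "r = P @ q" and qy: "xyp m' @ v = q @ y"
        have pP: "piece R P" using zp_piece[of n] G2 piece_pre by metis
        from app_split[OF qy[symmetric]] show False
        proof (elim disjE exE conjE)
          fix w assume "xyp m' = q @ w" "y = w @ v"
          then have m'e: "m' = [] @ q @ (w @ zp m')" using xy_zp[of m'] by simp
          have "piece R q" using piece_I[OF G2(2) mW m'e, of "s @ P" "[]"] mr rq sne by auto
          then show False using np3[OF mW ps pP, of q] mr rq by simp
        next
          fix w assume "w \<noteq> []" "q = xyp m' @ w" "v = w @ y"
          then have "piece R (xyp m')"
            using piece_I[OF G2(2) mW, of "[]" "xyp m'" "zp m'" "s @ P" w] xy_zp[of m'] mr rq sne by auto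
          then show False using xy_np G2(2) by blast
        qed
      qed
    qed
  qed
qed

lemma G_step: "G Z u \<Longrightarrow> piece R Z \<Longrightarrow> stp R u u' \<Longrightarrow> G Z u'"
proof (induction arbitrary: u' rule: G.induct)
  case (G1 Z t)
  then obtain x y l r where lr: "relw R l r" and e1: "Z @ t = x @ l @ y" and e2: "u' = x @ r @ y"
    unfolding stp_def by blast
  have rW: "r \<in> W" using relw_W[OF lr] by blast
  from app_split[OF e1] show ?case
  proof (elim disjE exE conjE)
    fix w assume "x = Z @ w" "t = w @ l @ y"
    then have "u' = Z @ (w @ r @ y)" using e2 by simp
    then show ?case by (simp add: G.G1)
  next
    fix w assume "w \<noteq> []" "Z = x @ w" "l @ y = w @ t"
    have "u' = x @ xyp r @ (zp r @ y)" using e2 xy_zp[of r] by simp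
    then show ?case using G.G2[OF rW \<open>Z = x @ w\<close> G.G1[of "zp r" y]] by simp
  qed
next
  case (G2 m Z P P' v)
  then obtain x y l r where lr: "relw R l r" and e1: "P @ xyp m @ v = x @ l @ y" and e2: "u' = x @ r @ y"
    unfolding stp_def by blast
  have rW: "r \<in> W" and lW: "l \<in> W" using relw_W[OF lr] by auto
  note mW = G2(1)
  from app_split[OF e1] show ?case
  proof (elim disjE exE conjE)
    fix w assume xw: "x = P @ w" and e3: "xyp m @ v = w @ l @ y"
    from app_split[OF e3] show ?case
    proof (elim disjE exE conjE)
      fix w2 assume "w = xyp m @ w2" "v = w2 @ l @ y"
      then have "stp R v (w2 @ r @ y)" unfolding stp_def using lr by blast
      then have "G (zp m) (w2 @ r @ y)" using G2.IH zp_piece by blast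
      moreover have "u' = P @ xyp m @ (w2 @ r @ y)" using e2 xw \<open>w = xyp m @ w2\<close> by simp
      ultimately show ?case using G.G2[OF mW G2(2)] by simp
    next
      fix w' assume w'ne: "w' \<noteq> []" and xw': "xyp m = w @ w'" and lw: "l @ y = w' @ v"
      show ?case
      proof (cases "w = []")
        case True
        have lm: "l = m"
        proof -
          have "l @ y = xyp m @ v" using lw xw' True by simp
          from app_split[OF this] show "l = m"
          proof (elim disjE exE conjE)
            fix z assume "xyp m = l @ z" "y = z @ v"
            then have "m = [] @ l @ (z @ zp m)" using xy_zp[of m] by simp
            then show "l = m" using NC[OF lW mW] by blast
          next
            fix z assume "z \<noteq> []" "l = xyp m @ z" "v = z @ y"
            show "l = m"
            proof (rule ccontr)
              assume "l \<noteq> m"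
              then have "piece R (xyp m)"
                using piece_I[OF lW mW, of "[]" "xyp m" z "[]" "zp m"] \<open>l = xyp m @ z\<close> xy_zp[of m] by auto
              then show False using xy_np mW by blast
            qed
          qed
        qed
        then have "xyp m @ zp m @ y = xyp m @ v" using lw xw' True xy_zp[of m] by (metis append.assoc append_Nil)
        then have "v = zp m @ y" by simp
        have "u' = P @ xyp r @ (zp r @ y)" using e2 xw True xy_zp[of r] by simp
        then show ?thesis using G.G2[OF rW G2(2) G.G1[of "zp r" y]] by simp
      next
        case False
        have "xyp m @ v = w @ l @ y" using e3 .
        then show ?thesis using safe[OF mW G2(3), of w l y] lW False xw' w'ne by simp
      qed
    qed
  next
    fix z assume zne: "z \<noteq> []" and Pz: "P = x @ z" and e3: "l @ y = z @ xyp m @ v"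
    have pz: "piece R z" using G2(5) G2(2) Pz piece_factor[of x z P'] by simp
    from app_split[OF e3] show ?case
    proof (elim disjE exE conjE)
      fix w assume "z = l @ w" "y = w @ xyp m @ v"
      then show ?case using pz piece_pre np1 lW by blast
    next
      fix w5 assume w5ne: "w5 \<noteq> []" and lz: "l = z @ w5" and e4: "xyp m @ v = w5 @ y"
      from app_split[OF e4[symmetric]] show ?case
      proof (elim disjE exE conjE)
        fix w assume "xyp m = w5 @ w" "y = w @ v"
        then have "piece R w5"
          using piece_I[OF mW lW, of "[]" w5 "w @ zp m" z "[]"] xy_zp[of m] lz zne by auto
        then show ?case using np2[OF lW pz] lz by blast
      next
        fix w assume "w \<noteq> []" "w5 = xyp m @ w" "v = w @ y"
        then have "piece R (xyp m)"
          using piece_I[OF mW lW, of "[]" "xyp m" "zp m" z w] xy_zp[of m] lz zne by auto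
        then show ?case using xy_np mW by blast
      qed
    qed
  qed
qed

lemma G_steps: "(stp R)\<^sup>*\<^sup>* u u' \<Longrightarrow> G Z u \<Longrightarrow> piece R Z \<Longrightarrow> G Z u'"
  by (induction rule: rtranclp_induct) (auto intro: G_step)

end

context sc4
begin

lemma relw_uniq: "relw R n l \<Longrightarrow> relw R n r \<Longrightarrow> l = r"
proof -
  define f where "f = (\<lambda>(p :: 'a list \<times> 'a list, b :: bool). if b then snd p else fst p)"
  have inj: "inj_on f (R \<times> UNIV)" using NR unfolding no_repeated_rel_words_def f_def .
  have key: "p1 = p2 \<and> b1 = b2" if "p1 \<in> R" "p2 \<in> R" "f (p1, b1) = f (p2, b2)" for p1 p2 b1 b2
    using inj_onD[OF inj that(3)] that by auto
  assume "relw R n l" "relw R n r"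
  then show "l = r" unfolding relw_def
  proof (elim disjE)
    assume "(n, l) \<in> R" "(n, r) \<in> R" then show ?thesis using key[of "(n,l)" "(n,r)" False False] by (simp add: f_def)
  next
    assume "(n, l) \<in> R" "(r, n) \<in> R" then show ?thesis using key[of "(n,l)" "(r,n)" False True] by (simp add: f_def)
  next
    assume "(l, n) \<in> R" "(n, r) \<in> R" then show ?thesis using key[of "(l,n)" "(n,r)" True False] by (simp add: f_def)
  next
    assume "(l, n) \<in> R" "(r, n) \<in> R" then show ?thesis using key[of "(l,n)" "(r,n)" True True] by (simp add: f_def)
  qed
qed

lemma only_if: assumes "(a # r, a # s) \<in> R" shows "\<not> pres_cong R r s"
proof
  define f where "f = (\<lambda>(p :: 'a list \<times> 'a list, b :: bool). if b then snd p else fst p)"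
  have inj: "inj_on f (R \<times> UNIV)" using NR unfolding no_repeated_rel_words_def f_def .
  have "r \<noteq> s"
  proof
    assume "r = s"
    then have "f ((a # r, a # s), False) = f ((a # r, a # s), True)" by (simp add: f_def)
    from inj_onD[OF inj this] assms show False by auto
  qed
  assume "pres_cong R r s"
  then have "(stp R)\<^sup>*\<^sup>* r s" by (rule cong_imp_rt)
  then show False
  proof (cases rule: converse_rtranclpE)
    case base then show False using \<open>r \<noteq> s\<close> by simp
  next
    case (step r1)
    then obtain x y l l2 where "relw R l l2" "r = x @ l @ y" unfolding stp_def by blast
    moreover have "a # r \<in> W" using assms unfolding rel_words_def by force
    ultimately have "a # x = []" using NC[of l "a # r" "a # x" y] relw_W by auto
    then show False by simp
  qed
qed

lemma pre_rel: "l \<in> W \<Longrightarrow> m \<in> W \<Longrightarrow> l @ y = xyp m @ v \<Longrightarrow> l = m"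
proof -
  assume lW: "l \<in> W" and mW: "m \<in> W" and e: "l @ y = xyp m @ v"
  from app_split[OF e] show "l = m"
  proof (elim disjE exE conjE)
    fix z assume "xyp m = l @ z" "y = z @ v"
    then have "m = [] @ l @ (z @ zp m)" using xy_zp[of m] by simp
    then show "l = m" using NC[OF lW mW] by blast
  next
    fix z assume "z \<noteq> []" "l = xyp m @ z" "v = z @ y"
    show "l = m"
    proof (rule ccontr)
      assume "l \<noteq> m"
      then have "piece R (xyp m)"
        using piece_I[OF lW mW, of "[]" "xyp m" z "[]" "zp m"] \<open>l = xyp m @ z\<close> xy_zp[of m] by auto
      then show False using xy_np mW by blast
    qed
  qed
qed

lemma Dlem: "(stp R ^^ n) (a # y) w \<Longrightarrow> (\<exists>y'. w = a # y' \<and> (stp R ^^ n) y y') \<or>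
  (\<exists>i l' t nb k. i < n \<and> (stp R ^^ i) y (l' @ t) \<and> relw R (a # l') nb \<and> (stp R ^^ k) (nb @ t) w \<and> Suc (i + k) = n)"
proof (induction n arbitrary: w)
  case 0 then show ?case by simp
next
  case (Suc n)
  from Suc.prems obtain w1 where h1: "(stp R ^^ n) (a # y) w1" and h2: "stp R w1 w" by (auto elim: relpowp_Suc_E)
  from Suc.IH[OF h1] show ?case
  proof (elim disjE exE conjE)
    fix y' assume w1: "w1 = a # y'" and yy: "(stp R ^^ n) y y'"
    from h2 obtain x yy l r where lr: "relw R l r" and e1: "a # y' = x @ l @ yy" and e2: "w = x @ r @ yy"
      unfolding stp_def w1 by blast
    show ?case
    proof (cases x)
      case Nil
      have "l \<noteq> []" using W_ne relw_W[OF lr] by blast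
      then obtain c l' where "l = c # l'" by (cases l) auto
      then have "c = a" "y' = l' @ yy" "l = a # l'" using e1 Nil by auto
      then show ?thesis using lr yy e2 Nil by (intro disjI2 exI[of _ n] exI[of _ l'] exI[of _ yy] exI[of _ r] exI[of _ 0]) auto
    next
      case (Cons c x')
      then have "y' = x' @ l @ yy" "w = a # (x' @ r @ yy)" using e1 e2 by auto
      moreover have "stp R (x' @ l @ yy) (x' @ r @ yy)" unfolding stp_def using lr by blast
      ultimately show ?thesis using yy by (auto intro: relpowp_Suc_I)
    qed
  next
    fix i l' t nb k assume "i < n" "(stp R ^^ i) y (l' @ t)" "relw R (a # l') nb" "(stp R ^^ k) (nb @ t) w1" "Suc (i + k) = n"
    then show ?case using h2 by (intro disjI2 exI[of _ i] exI[of _ l'] exI[of _ t] exI[of _ nb] exI[of _ "Suc k"]) (auto intro: relpowp_Suc_I)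
  qed
qed

lemma Elem: "nb \<in> W \<Longrightarrow> G (zp nb) u \<Longrightarrow> (stp R ^^ m) (xyp nb @ u) w \<Longrightarrow>
  (\<exists>u'. w = xyp nb @ u' \<and> (stp R ^^ m) u u') \<or>
  (\<exists>j t' r k. Suc (j + k) = m \<and> (stp R ^^ j) u (zp nb @ t') \<and> relw R nb r \<and> (stp R ^^ k) (r @ t') w)"
proof (induction m arbitrary: w)
  case 0 then show ?case by simp
next
  case (Suc m)
  from Suc.prems obtain w1 where h1: "(stp R ^^ m) (xyp nb @ u) w1" and h2: "stp R w1 w" by (auto elim: relpowp_Suc_E)
  from Suc.IH[OF Suc.prems(1,2) h1] show ?case
  proof (elim disjE exE conjE)
    fix u' assume w1: "w1 = xyp nb @ u'" and uu: "(stp R ^^ m) u u'"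
    have Gu: "G (zp nb) u'" using G_steps[OF relpowp_imp_rtranclp[OF uu] Suc.prems(2) zp_piece] .
    from h2 obtain x yy l r where lr: "relw R l r" and e1: "xyp nb @ u' = x @ l @ yy" and e2: "w = x @ r @ yy"
      unfolding stp_def w1 by blast
    have lW: "l \<in> W" using relw_W[OF lr] by blast
    from app_split[OF e1] show ?case
    proof (elim disjE exE conjE)
      fix w2 assume "x = xyp nb @ w2" "u' = w2 @ l @ yy"
      moreover have "stp R (w2 @ l @ yy) (w2 @ r @ yy)" unfolding stp_def using lr by blast
      ultimately show ?case using uu e2 by (auto intro: relpowp_Suc_I)
    next
      fix w2 assume w2ne: "w2 \<noteq> []" and xw: "xyp nb = x @ w2" and lw: "l @ yy = w2 @ u'"
      show ?case
      proof (cases "x = []")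
        case False
        then show ?thesis using safe[OF Suc.prems(1) Gu e1 lW] xw w2ne by simp
      next
        case True
        then have "l @ yy = xyp nb @ u'" using xw lw by simp
        then have "l = nb" using pre_rel[OF lW Suc.prems(1)] by blast
        then have "xyp nb @ zp nb @ yy = xyp nb @ u'" using \<open>l @ yy = xyp nb @ u'\<close> xy_zp[of nb]
          by (metis append.assoc)
        then have "u' = zp nb @ yy" by simp
        then show ?thesis using uu lr \<open>l = nb\<close> e2 True
          by (intro disjI2 exI[of _ m] exI[of _ yy] exI[of _ r] exI[of _ 0]) auto
      qed
    qed
  next
    fix j t' r k assume "Suc (j + k) = m" "(stp R ^^ j) u (zp nb @ t')" "relw R nb r" "(stp R ^^ k) (r @ t') w1"
    then show ?case using h2 by (intro disjI2 exI[of _ j] exI[of _ t'] exI[of _ r] exI[of _ "Suc k"]) (auto intro: relpowp_Suc_I)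
  qed
qed

end

locale sc4nd = sc4 +
  assumes ND: "\<not> (\<exists>a r s. (a # r, a # s) \<in> R)"
begin

lemma hd_diff: "relw R (a # l') (c # r') \<Longrightarrow> c \<noteq> a"
  using ND unfolding relw_def by blast

lemma main: "(stp R ^^ n) (a # y) (a # z) \<Longrightarrow> \<exists>k\<le>n. (stp R ^^ k) y z"
proof (induction n arbitrary: a y z rule: less_induct)
  case (less n)
  have pre: "\<exists>j'\<le>j. (stp R ^^ j') t t'" if "j < n" "(stp R ^^ j) (x @ t) (x @ t')" for j x t t'
    using that
  proof (induction x arbitrary: j)
    case Nil then show ?case by auto
  next
    case (Cons c x)
    then obtain j1 where "j1 \<le> j" "(stp R ^^ j1) (x @ t) (x @ t')" using less.IH[of j c "x @ t" "x @ t'"] by auto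
    then show ?case using Cons.IH[of j1] Cons.prems(1) by (meson le_trans order.strict_trans1)
  qed
  from Dlem[OF less.prems] show ?case
  proof (elim disjE exE conjE)
    fix y' assume "a # z = a # y'" "(stp R ^^ n) y y'"
    then show ?case by auto
  next
    fix i l' t nb k assume i: "i < n" and yi: "(stp R ^^ i) y (l' @ t)" and rl: "relw R (a # l') nb"
      and kk: "(stp R ^^ k) (nb @ t) (a # z)" and nn: "Suc (i + k) = n"
    have nbW: "nb \<in> W" using relw_W[OF rl] by blast
    have kk': "(stp R ^^ k) (xyp nb @ (zp nb @ t)) (a # z)" using kk xy_zp[of nb] by (metis append.assoc)
    from Elem[OF nbW G.G1 kk'] show ?case
    proof (elim disjE exE conjE)
      fix u' assume e: "a # z = xyp nb @ u'"
      obtain c cs where "xyp nb = c # cs" using xy_ne[OF nbW] by (cases "xyp nb") auto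
      then have "nb = c # (cs @ zp nb)" "c = a" using e xy_zp[of nb] by (metis append_Cons, auto)
      then show ?case using hd_diff rl by metis
    next
      fix j t' r k2 assume jk: "Suc (j + k2) = k" and jj: "(stp R ^^ j) (zp nb @ t) (zp nb @ t')"
        and rr: "relw R nb r" and k2: "(stp R ^^ k2) (r @ t') (a # z)"
      have "r = a # l'" using relw_uniq[OF rr relw_sym[OF rl]] .
      then have "(stp R ^^ k2) (a # (l' @ t')) (a # z)" using k2 by simp
      moreover have "k2 < n" using jk nn by simp
      ultimately obtain k3 where k3: "k3 \<le> k2" "(stp R ^^ k3) (l' @ t') z" using less.IH[of k2 a "l' @ t'" z] by blast
      obtain j' where j': "j' \<le> j" "(stp R ^^ j') t t'" using pre[OF _ jj] jk nn by auto
      have "(stp R ^^ j') (l' @ t) (l' @ t')" using pow_prefix[OF j'(2)] .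
      then have "(stp R ^^ (i + j' + k3)) y z" using yi k3(2) by (auto simp: relpowp_add)
      moreover have "i + j' + k3 \<le> n" using jk nn j' k3 by simp
      ultimately show ?case by blast
    qed
  qed
qed

lemma prefix_cancel: "(stp R ^^ n) (x @ y) (x @ z) \<Longrightarrow> \<exists>k. (stp R ^^ k) y z"
proof (induction x arbitrary: n)
  case Nil then show ?case by auto
next
  case (Cons c x)
  then show ?case using main[of n c "x @ y" "x @ z"] by auto
qed

end


theorem corollary7:
  fixes R :: "('a list \<times> 'a list) set"
  assumes "strongly_C 4 R"
  shows "left_cancellative R \<longleftrightarrow> \<not> (\<exists>a r s. (a # r, a # s) \<in> R)"
proof -
  have h1: "small_overlap_C 4 R" and h2: "no_repeated_rel_words R" using assms unfolding strongly_C_def by auto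
  interpret sc4 R by (rule sc4.intro[OF h1 h2])
  show ?thesis
  proof
    assume lc: "left_cancellative R"
    show "\<not> (\<exists>a r s. (a # r, a # s) \<in> R)"
    proof
      assume "\<exists>a r s. (a # r, a # s) \<in> R"
      then obtain a r s where h: "(a # r, a # s) \<in> R" by blast
      then have "pres_cong R ([a] @ r) ([a] @ s)" by (simp add: pres_cong.base)
      then have "pres_cong R r s" using lc[unfolded left_cancellative_def, rule_format, of "[a]" r s] by simp
      then show False using only_if[OF h] by blast
    qed
  next
    assume nd: "\<not> (\<exists>a r s. (a # r, a # s) \<in> R)"
    interpret sc4nd R by (rule sc4nd.intro[OF sc4.intro[OF h1 h2] sc4nd_axioms.intro[OF nd]])
    show "left_cancellative R" unfolding left_cancellative_def
    proof (intro allI impI)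
      fix x y z assume "pres_cong R (x @ y) (x @ z)"
      then have "(stp R)\<^sup>*\<^sup>* (x @ y) (x @ z)" by (rule cong_imp_rt)
      then obtain n where "(stp R ^^ n) (x @ y) (x @ z)" using rtranclp_imp_relpowp by metis
      then obtain k where "(stp R ^^ k) y z" using prefix_cancel by metis
      then show "pres_cong R y z" by (intro rt_imp_cong relpowp_imp_rtranclp)
    qed
  qed
qed

end
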